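(* Let $A\subset E$ be nonempty with finitely many minimal elements. Then the problem $$\min_L \xi(L)\quad\text{s.t. } L\text{ is a lower contour set in } A$$ admits a solution and has a largest minimizer, i.e. a minimizer $L^\star$ such that every minimizer $L$ satisfies $L\subset L^\star$.
   Context: $E$ is a finite or countably infinite set with a preorder $\precsim$ (reflexive and transitive) such that for every sequence $e_1\succsim e_2\succsim\cdots$ in $E$ there is $N\ge1$ with $e_N\precsim e_n$ for all $n\ge N$. Write $e\sim e'$ if $e\precsim e'$ and $e'\precsim e$. The minimal elements of $A$ are $\min(A,\precsim)=\{e\in A:\forall e'\in A,\ e'\precsim e\Rightarrow e'\sim e\}$. $\pi_0\in(0,1)$; $F_G,F_B$ are probability distributions on $E$ such that every $e\in E$ has $F_G(e)>0$ or $F_B(e)>0$. For nonempty $B\subset E$, $\nu(B)=\frac{F_G(B)\pi_0}{F_G(B)\pi_0+F_B(B)(1-\pi_0)}$ and $\xi(B)=\phi(\nu(B))$, where $\phi:[0,1]\to\mathbb{R}$ is strictly increasing. For nonempty $A\subset E$, a nonempty $L\subset A$ is a lower contour set in $A$ if for all $e\in L$ and $e'\in A$, $e'\precsim e$ implies $e'\in L$. *)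

theory Defs
  imports "HOL-Probability.Probability"
begin

definition min_elems :: "('e \<Rightarrow> 'e \<Rightarrow> bool) \<Rightarrow> 'e set \<Rightarrow> 'e set" where
  "min_elems le A = {e \<in> A. \<forall>e'\<in>A. le e' e \<longrightarrow> (le e' e \<and> le e e')}"

definition lower_contour :: "('e \<Rightarrow> 'e \<Rightarrow> bool) \<Rightarrow> 'e set \<Rightarrow> 'e set \<Rightarrow> bool" where
  "lower_contour le A L \<longleftrightarrow> L \<noteq> {} \<and> L \<subseteq> A \<and> (\<forall>e\<in>L. \<forall>e'\<in>A. le e' e \<longrightarrow> e' \<in> L)"

definition nu :: "real \<Rightarrow> 'e pmf \<Rightarrow> 'e pmf \<Rightarrow> 'e set \<Rightarrow> real" where
  "nu \<pi>0 FG FB B = measure_pmf.prob FG B * \<pi>0 /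
     (measure_pmf.prob FG B * \<pi>0 + measure_pmf.prob FB B * (1 - \<pi>0))"

definition xi :: "(real \<Rightarrow> real) \<Rightarrow> real \<Rightarrow> 'e pmf \<Rightarrow> 'e pmf \<Rightarrow> 'e set \<Rightarrow> real" where
  "xi \<phi> \<pi>0 FG FB B = \<phi> (nu \<pi>0 FG FB B)"

end

theory Submission
  imports Defs
begin

definition mu2 :: "real \<Rightarrow> real \<Rightarrow> 'e pmf \<Rightarrow> 'e pmf \<Rightarrow> 'e set \<Rightarrow> real" where
  "mu2 a b P Q L = a * measure_pmf.prob P L + b * measure_pmf.prob Q L"

lemma mu2_UnInt: "mu2 a b P Q (X \<union> Y) = mu2 a b P Q X + mu2 a b P Q Y - mu2 a b P Q (X \<inter> Y)"
proof -
  have eqs: "measure_pmf.prob P (X \<union> Y) = measure_pmf.prob P X + measure_pmf.prob P Y - measure_pmf.prob P (X \<inter> Y)"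
    "measure_pmf.prob Q (X \<union> Y) = measure_pmf.prob Q X + measure_pmf.prob Q Y - measure_pmf.prob Q (X \<inter> Y)"
    by (auto intro!: measure_Un3 simp: fmeasurable_def measure_pmf.emeasure_finite less_top[symmetric])
  show ?thesis unfolding mu2_def eqs by (simp add: algebra_simps)
qed

lemma mu2_empty: "mu2 a b P Q {} = 0"
  by (simp add: mu2_def)

lemma mu2_inc: "incseq S \<Longrightarrow> (\<lambda>n. mu2 a b P Q (S n)) \<longlonglongrightarrow> mu2 a b P Q (\<Union>n. S n)"
  unfolding mu2_def
  by (intro tendsto_intros measure_pmf.finite_Lim_measure_incseq) auto

lemma mu2_dec: "decseq S \<Longrightarrow> (\<lambda>n. mu2 a b P Q (S n)) \<longlonglongrightarrow> mu2 a b P Q (\<Inter>n. S n)"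
  unfolding mu2_def
  by (intro tendsto_intros measure_pmf.finite_Lim_measure_decseq) auto

lemma lc_Inter: "F \<noteq> {} \<Longrightarrow> \<forall>L\<in>F. lower_contour le A L \<Longrightarrow> \<Inter>F \<noteq> {} \<Longrightarrow> lower_contour le A (\<Inter>F)"
  unfolding lower_contour_def by blast

lemma lc_Union: "F \<noteq> {} \<Longrightarrow> \<forall>L\<in>F. lower_contour le A L \<Longrightarrow> lower_contour le A (\<Union>F)"
  unfolding lower_contour_def by blast


lemma core_exist:
  fixes mu :: "'e set \<Rightarrow> real" and a b :: real and P Q :: "'e pmf"
  defines "mu \<equiv> mu2 a b P Q"
  assumes nonneg: "\<And>L. lower_contour le A L \<Longrightarrow> mu L \<ge> 0"
    and small: "\<And>k::nat. \<exists>L. lower_contour le A L \<and> m \<in> L \<and> mu L < (1/2)^k"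
  shows "\<exists>L. lower_contour le A L \<and> m \<in> L \<and> mu L \<le> 0"
proof -
  obtain L where L: "\<And>k. lower_contour le A (L k) \<and> m \<in> L k \<and> mu (L k) < (1/2)^k"
    using small by metis
  define X where "X n N = (\<Inter>k\<in>{n..N}. L k)" for n N
  have Xlow: "lower_contour le A (X n N) \<and> m \<in> X n N" if "n \<le> N" for n N
  proof -
    have "m \<in> X n N" using L by (auto simp: X_def)
    moreover have "lower_contour le A (X n N)"
      unfolding X_def using that L \<open>m \<in> X n N\<close>
      by (intro lc_Inter) (auto simp: X_def)
    ultimately show ?thesis by simp
  qed
  have Xb: "mu (X n N) < 2*(1/2)^n - (1/2)^N" if "n \<le> N" for n N
    using that
  proof (induction N rule: dec_induct)
    case base
    then show ?case using L[of n] by (simp add: X_def)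
  next
    case (step N)
    have eq: "X n (Suc N) = X n N \<inter> L (Suc N)"
      using step.hyps by (auto simp: X_def le_Suc_eq)
    have "lower_contour le A (X n N \<union> L (Suc N))"
      using Xlow[OF step.hyps(1)] L[of "Suc N"] lc_Union[of "{X n N, L (Suc N)}" le A] by auto
    then have "mu (X n N \<union> L (Suc N)) \<ge> 0" by (rule nonneg)
    moreover have "mu (X n N \<union> L (Suc N)) = mu (X n N) + mu (L (Suc N)) - mu (X n (Suc N))"
      unfolding eq mu_def by (rule mu2_UnInt)
    ultimately show ?case using step.IH L[of "Suc N"] by simp
  qed
  define K where "K n = (\<Inter>k\<in>{n..}. L k)" for n
  have KX: "K n = (\<Inter>N. X n (n+N))" for n
  proof (intro equalityI subsetI)
    fix e assume "e \<in> K n" then show "e \<in> (\<Inter>N. X n (n+N))" by (auto simp: K_def X_def)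
  next
    fix e assume e: "e \<in> (\<Inter>N. X n (n+N))"
    show "e \<in> K n" unfolding K_def
    proof (rule INT_I)
      fix k assume "k \<in> {n..}"
      then have k: "k \<in> {n..n+(k-n)}" by simp
      from e have "e \<in> X n (n+(k-n))" by blast
      with k show "e \<in> L k" unfolding X_def by blast
    qed
  qed
  have Klow: "lower_contour le A (K n) \<and> m \<in> K n" for n
  proof -
    have "m \<in> K n" using L by (auto simp: K_def)
    moreover have "lower_contour le A (K n)"
      unfolding K_def using L \<open>m \<in> K n\<close>
      by (intro lc_Inter) (auto simp: K_def)
    ultimately show ?thesis by simp
  qed
  have Kb: "mu (K n) \<le> 2*(1/2)^n" for n
  proof -
    have "decseq (\<lambda>N. X n (n+N))"
      by (auto simp: decseq_def X_def)
    then have "(\<lambda>N. mu (X n (n+N))) \<longlonglongrightarrow> mu (K n)"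
      unfolding KX mu_def by (rule mu2_dec)
    moreover have "\<forall>N\<ge>0. mu (X n (n+N)) \<le> 2*(1/2)^n"
    proof (intro allI impI)
      fix N :: nat
      have "mu (X n (n+N)) < 2*(1/2)^n - (1/2)^(n+N)" by (rule Xb) simp
      moreover have "(0::real) \<le> (1/2)^(n+N)" by simp
      ultimately show "mu (X n (n+N)) \<le> 2*(1/2)^n" by linarith
    qed
    ultimately show ?thesis by (intro LIMSEQ_le_const2) auto
  qed
  have "incseq K" by (auto simp: incseq_def K_def)
  then have lim: "(\<lambda>n. mu (K n)) \<longlonglongrightarrow> mu (\<Union>n. K n)"
    unfolding mu_def by (rule mu2_inc)
  have lim2: "(\<lambda>n. 2*(1/2)^n :: real) \<longlonglongrightarrow> 0"
    by (intro tendsto_eq_intros LIMSEQ_power_zero) auto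
  have "mu (\<Union>n. K n) \<le> 0"
    using LIMSEQ_le[OF lim lim2] Kb by auto
  moreover have "lower_contour le A (\<Union>n. K n)"
    using Klow lc_Union[of "range K" le A] by auto
  moreover have "m \<in> (\<Union>n. K n)" using Klow by auto
  ultimately show ?thesis by blast
qed

lemma core_union:
  fixes mu :: "'e set \<Rightarrow> real" and a b :: real and P Q :: "'e pmf"
  defines "mu \<equiv> mu2 a b P Q"
  assumes nonneg: "\<And>L. lower_contour le A L \<Longrightarrow> mu L \<ge> 0"
    and cA: "countable A"
    and L0: "lower_contour le A L0" "mu L0 = 0"
  defines "U \<equiv> \<Union>{L. lower_contour le A L \<and> mu L = 0}"
  shows "lower_contour le A U \<and> mu U = 0"
proof -
  have Ulow: "lower_contour le A U"
    unfolding U_def using L0 by (intro lc_Union) auto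
  then have Une: "U \<noteq> {}" and UA: "U \<subseteq> A" by (auto simp: lower_contour_def)
  have cU: "countable U" using cA UA countable_subset by blast
  have "\<forall>e\<in>U. \<exists>L. lower_contour le A L \<and> mu L = 0 \<and> e \<in> L"
    unfolding U_def by blast
  then obtain Le where Le: "\<And>e. e \<in> U \<Longrightarrow> lower_contour le A (Le e) \<and> mu (Le e) = 0 \<and> e \<in> Le e"
    by metis
  define g where "g = from_nat_into U"
  have g: "g j \<in> U" for j unfolding g_def using Une by (rule from_nat_into)
  define M where "M j = Le (g j)" for j
  have M: "lower_contour le A (M j) \<and> mu (M j) = 0" for j
    using Le[OF g] by (simp add: M_def)
  define N where "N n = (\<Union>j\<le>n. M j)" for n
  have N: "lower_contour le A (N n) \<and> mu (N n) = 0" for n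
  proof (induction n)
    case 0
    then show ?case using M[of 0] by (simp add: N_def)
  next
    case (Suc n)
    have eq: "N (Suc n) = N n \<union> M (Suc n)"
      by (auto simp: N_def le_Suc_eq)
    have low: "lower_contour le A (N (Suc n))"
      unfolding eq using Suc.IH M[of "Suc n"] lc_Union[of "{N n, M (Suc n)}" le A] by auto
    have "mu (N n \<inter> M (Suc n)) \<ge> 0"
    proof (cases "N n \<inter> M (Suc n) = {}")
      case True
      then show ?thesis by (simp add: mu_def mu2_empty)
    next
      case False
      then have "lower_contour le A (N n \<inter> M (Suc n))"
        using Suc.IH M[of "Suc n"] lc_Inter[of "{N n, M (Suc n)}" le A] by auto
      then show ?thesis by (rule nonneg)
    qed
    moreover have "mu (N (Suc n)) = mu (N n) + mu (M (Suc n)) - mu (N n \<inter> M (Suc n))"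
      unfolding eq mu_def by (rule mu2_UnInt)
    moreover have "mu (N (Suc n)) \<ge> 0" using low by (rule nonneg)
    ultimately show ?case using low Suc.IH M[of "Suc n"] by simp
  qed
  have "(\<Union>n. N n) = U"
  proof
    show "(\<Union>n. N n) \<subseteq> U" using N unfolding U_def by blast
  next
    show "U \<subseteq> (\<Union>n. N n)"
    proof
      fix e assume "e \<in> U"
      then obtain j where "g j = e" using range_from_nat_into[OF Une cU] unfolding g_def by (metis rangeE)
      then have "e \<in> M j" using Le[OF \<open>e \<in> U\<close>] by (simp add: M_def)
      then show "e \<in> (\<Union>n. N n)" by (auto simp: N_def)
    qed
  qed
  moreover have "incseq N" unfolding incseq_def N_def by (intro allI impI UN_mono) auto
  then have "(\<lambda>n. mu (N n)) \<longlonglongrightarrow> mu (\<Union>n. N n)"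
    unfolding mu_def by (rule mu2_inc)
  ultimately have "(\<lambda>n. 0::real) \<longlonglongrightarrow> mu U" using N by simp
  then have "mu U = 0" using LIMSEQ_unique tendsto_const by blast
  with Ulow show ?thesis by simp
qed


lemma exists_min:
  fixes le :: "'e \<Rightarrow> 'e \<Rightarrow> bool"
  assumes refl: "\<And>e. e \<in> E \<Longrightarrow> le e e"
    and trans: "\<And>a b c. a \<in> E \<Longrightarrow> b \<in> E \<Longrightarrow> c \<in> E \<Longrightarrow> le a b \<Longrightarrow> le b c \<Longrightarrow> le a c"
    and wqo: "\<And>s :: nat \<Rightarrow> 'e. (\<forall>n. s n \<in> E) \<Longrightarrow> (\<forall>n. le (s (Suc n)) (s n)) \<Longrightarrow>
                 \<exists>N. \<forall>n\<ge>N. le (s N) (s n)"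
    and AE: "A \<subseteq> E" and x: "x \<in> A"
  shows "\<exists>m\<in>min_elems le A. le m x"
proof (rule ccontr)
  assume H: "\<not> (\<exists>m\<in>min_elems le A. le m x)"
  define Inv where "Inv y \<longleftrightarrow> y \<in> A \<and> (\<forall>m\<in>min_elems le A. \<not> le m y)" for y
  have step: "\<exists>y'. y' \<in> A \<and> le y' y \<and> \<not> le y y' \<and> Inv y'" if "Inv y" for y
  proof -
    have yA: "y \<in> A" using that by (simp add: Inv_def)
    have "y \<notin> min_elems le A"
      using that refl yA AE by (auto simp: Inv_def)
    then obtain y' where y': "y' \<in> A" "le y' y" "\<not> le y y'"
      using yA by (auto simp: min_elems_def)
    have "Inv y'"
      unfolding Inv_def
    proof (intro conjI ballI notI)
      show "y' \<in> A" by fact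
    next
      fix m assume m: "m \<in> min_elems le A" "le m y'"
      then have "m \<in> A" by (simp add: min_elems_def)
      then have "le m y" using trans[of m y' y] m y' yA AE by auto
      then show False using that m by (auto simp: Inv_def)
    qed
    with y' show ?thesis by blast
  qed
  define f where "f y = (SOME y'. y' \<in> A \<and> le y' y \<and> \<not> le y y' \<and> Inv y')" for y
  have f: "f y \<in> A \<and> le (f y) y \<and> \<not> le y (f y) \<and> Inv (f y)" if "Inv y" for y
    unfolding f_def using someI_ex[OF step[OF that]] .
  define s where "s n = (f ^^ n) x" for n
  have sI: "Inv (s n)" for n
  proof (induction n)
    case 0
    then show ?case using H x by (auto simp: s_def Inv_def)
  next
    case (Suc n)
    then show ?case using f by (simp add: s_def)
  qed
  have sS: "s (Suc n) = f (s n)" for n by (simp add: s_def)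
  have "\<forall>n. s n \<in> E" using sI AE by (auto simp: Inv_def)
  moreover have "\<forall>n. le (s (Suc n)) (s n)" using sS f sI by auto
  ultimately obtain N where "\<forall>n\<ge>N. le (s N) (s n)" using wqo by blast
  then have "le (s N) (s (Suc N))" by simp
  then show False using f[OF sI[of N]] sS[of N] by simp
qed

theorem lemmaA6:
  fixes E :: "'e set" and le :: "'e \<Rightarrow> 'e \<Rightarrow> bool"
    and \<pi>0 :: real and FG FB :: "'e pmf" and \<phi> :: "real \<Rightarrow> real" and A :: "'e set"
  assumes E_countable: "countable E"
    and refl: "\<And>e. e \<in> E \<Longrightarrow> le e e"
    and trans: "\<And>a b c. a \<in> E \<Longrightarrow> b \<in> E \<Longrightarrow> c \<in> E \<Longrightarrow> le a b \<Longrightarrow> le b c \<Longrightarrow> le a c"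
    and wqo: "\<And>s :: nat \<Rightarrow> 'e. (\<forall>n. s n \<in> E) \<Longrightarrow> (\<forall>n. le (s (Suc n)) (s n)) \<Longrightarrow>
                 \<exists>N. \<forall>n\<ge>N. le (s N) (s n)"
    and pi0: "0 < \<pi>0" "\<pi>0 < 1"
    and FG_E: "set_pmf FG \<subseteq> E" and FB_E: "set_pmf FB \<subseteq> E"
    and supp: "\<And>e. e \<in> E \<Longrightarrow> pmf FG e > 0 \<or> pmf FB e > 0"
    and phi: "strict_mono_on {0..1} \<phi>"
    and A: "A \<subseteq> E" "A \<noteq> {}"
    and fin_min: "finite (min_elems le A)"
  shows "\<exists>Ls. lower_contour le A Ls
           \<and> (\<forall>L. lower_contour le A L \<longrightarrow> xi \<phi> \<pi>0 FG FB Ls \<le> xi \<phi> \<pi>0 FG FB L)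
           \<and> (\<forall>L. lower_contour le A L \<and> xi \<phi> \<pi>0 FG FB L = xi \<phi> \<pi>0 FG FB Ls \<longrightarrow> L \<subseteq> Ls)"
proof -
  define P where "P L = measure_pmf.prob FG L" for L
  define Q where "Q L = measure_pmf.prob FB L" for L
  define D where "D L = P L * \<pi>0 + Q L * (1 - \<pi>0)" for L
  define nu' where "nu' = nu \<pi>0 FG FB"
  have nu'_eq: "nu' L = P L * \<pi>0 / D L" for L
    by (simp add: nu'_def nu_def P_def Q_def D_def)
  have PQ: "0 \<le> P L" "P L \<le> 1" "0 \<le> Q L" "Q L \<le> 1" for L
    by (auto simp: P_def Q_def)
  have Dpos: "D L > 0" if low: "lower_contour le A L" for L
  proof -
    obtain e where e: "e \<in> L" using low by (auto simp: lower_contour_def)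
    then have "e \<in> E" using low A by (auto simp: lower_contour_def)
    have "pmf FG e \<le> P L" unfolding P_def
      using measure_pmf.finite_measure_mono[of "{e}" L FG] e by (simp add: measure_pmf_single)
    moreover have "pmf FB e \<le> Q L" unfolding Q_def
      using measure_pmf.finite_measure_mono[of "{e}" L FB] e by (simp add: measure_pmf_single)
    moreover have "P L * \<pi>0 \<ge> 0" "Q L * (1 - \<pi>0) \<ge> 0" using PQ pi0 by auto
    ultimately have "P L > 0 \<or> Q L > 0" using supp[OF \<open>e \<in> E\<close>] by linarith
    then have "P L * \<pi>0 > 0 \<or> Q L * (1 - \<pi>0) > 0" using pi0 by auto
    then show ?thesis using \<open>P L * \<pi>0 \<ge> 0\<close> \<open>Q L * (1 - \<pi>0) \<ge> 0\<close> unfolding D_def by linarith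
  qed
  have Dle1: "D L \<le> 1" for L
  proof -
    have "P L * \<pi>0 \<le> \<pi>0" "Q L * (1 - \<pi>0) \<le> 1 - \<pi>0"
      using PQ[of L] pi0 by (auto intro: mult_left_le_one_le simp: mult.commute)
    then show ?thesis by (simp add: D_def)
  qed
  have nu01: "nu' L \<in> {0..1}" if "lower_contour le A L" for L
  proof -
    have d: "D L > 0" using Dpos[OF that] .
    have "P L * \<pi>0 \<le> D L" using PQ[of L] pi0 by (simp add: D_def)
    moreover have "0 \<le> P L * \<pi>0" using PQ[of L] pi0 by simp
    ultimately show ?thesis using d by (simp add: nu'_eq divide_le_eq_1)
  qed
  have xi_eq: "xi \<phi> \<pi>0 FG FB L = \<phi> (nu' L)" for L by (simp add: xi_def nu'_def)
  define LC where "LC = {L. lower_contour le A L}"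
  have ALC: "A \<in> LC" using A by (auto simp: LC_def lower_contour_def)
  define r where "r = Inf (nu' ` LC)"
  have bdd: "bdd_below (nu' ` LC)"
    using nu01 by (intro bdd_belowI[of _ 0]) (auto simp: LC_def)
  have r_le: "r \<le> nu' L" if "lower_contour le A L" for L
    unfolding r_def using that bdd by (intro cInf_lower) (auto simp: LC_def)
  define mu where "mu = mu2 (\<pi>0 - r*\<pi>0) (-(r*(1-\<pi>0))) FG FB"
  have mu_eq: "mu L = D L * (nu' L - r)" if "lower_contour le A L" for L
  proof -
    have d: "D L > 0" using Dpos[OF that] .
    have "D L * nu' L = P L * \<pi>0" using d by (simp add: nu'_eq)
    then show ?thesis
      unfolding mu_def mu2_def P_def[symmetric] Q_def[symmetric]
      by (simp add: algebra_simps D_def)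
  qed
  have nonneg: "mu L \<ge> 0" if "lower_contour le A L" for L
    using mu_eq[OF that] Dpos[OF that] r_le[OF that] by simp
  have small: "\<exists>L. lower_contour le A L \<and> mu L \<le> \<epsilon>" if "\<epsilon> > 0" for \<epsilon>
  proof -
    have "Inf (nu' ` LC) < r + \<epsilon>" using that by (simp add: r_def)
    then obtain L where L: "L \<in> LC" "nu' L < r + \<epsilon>"
      using cInf_lessD[of "nu' ` LC"] ALC by blast
    then have low: "lower_contour le A L" by (simp add: LC_def)
    have "mu L = D L * (nu' L - r)" by (rule mu_eq[OF low])
    also have "\<dots> \<le> D L * \<epsilon>"
      using Dpos[OF low] L by (intro mult_left_mono) auto
    also have "\<dots> \<le> \<epsilon>"
      using Dle1[of L] that by (simp add: mult_left_le_one_le)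
    finally show ?thesis using low by blast
  qed
  define Mn where "Mn = min_elems le A"
  have "\<exists>m\<in>Mn. \<forall>k::nat. \<exists>L. lower_contour le A L \<and> m \<in> L \<and> mu L < (1/2)^k"
  proof (rule ccontr)
    assume "\<not> ?thesis"
    then have ex: "\<forall>m\<in>Mn. \<exists>k::nat. \<forall>L. lower_contour le A L \<and> m \<in> L \<longrightarrow> \<not> mu L < (1/2)^k"
      by blast
    then obtain km where km0: "\<forall>m\<in>Mn. \<forall>L. lower_contour le A L \<and> m \<in> L \<longrightarrow> \<not> mu L < (1/2)^(km m)"
      using bchoice[OF ex] by blast
    have km: "\<not> mu L < (1/2)^(km m)" if "m \<in> Mn" "lower_contour le A L" "m \<in> L" for m L
      using km0 that by blast
    define K where "K = Max (km ` Mn)"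
    obtain L where L: "lower_contour le A L" "mu L \<le> (1/2)^(Suc K)"
      using small[of "(1/2)^(Suc K)"] by auto
    obtain x where x: "x \<in> L" using L by (auto simp: lower_contour_def)
    then have xA: "x \<in> A" using L by (auto simp: lower_contour_def)
    obtain m' where m': "m' \<in> Mn" "le m' x"
    proof -
      have "\<exists>m\<in>min_elems le A. le m x"
        using refl trans wqo A(1) xA by (rule exists_min)
      then show ?thesis using that unfolding Mn_def by blast
    qed
    have "m' \<in> A" using m' by (simp add: Mn_def min_elems_def)
    then have "m' \<in> L" using L(1) x m' by (auto simp: lower_contour_def)
    have "km m' \<le> K" unfolding K_def using fin_min m' by (simp add: Mn_def)
    then have "(1/2::real)^K \<le> (1/2)^(km m')" by (simp add: power_decreasing)
    moreover have "(1/2::real)^(Suc K) < (1/2)^K" by simp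
    ultimately have "mu L < (1/2)^(km m')" using L(2) by linarith
    then show False using km[OF m'(1) L(1) \<open>m' \<in> L\<close>] by simp
  qed
  then obtain m where hm: "\<forall>k::nat. \<exists>L. lower_contour le A L \<and> m \<in> L \<and> mu L < (1/2)^k"
    by blast
  have "\<exists>L. lower_contour le A L \<and> m \<in> L \<and> mu L \<le> 0"
    unfolding mu_def by (rule core_exist) (use nonneg hm in \<open>auto simp: mu_def\<close>)
  then obtain L0 where L0': "lower_contour le A L0" "mu L0 \<le> 0"
    by blast
  then have L0: "lower_contour le A L0" "mu L0 = 0" using nonneg[of L0] by auto
  have cA: "countable A" using A(1) E_countable countable_subset by blast
  define U where "U = \<Union>{L. lower_contour le A L \<and> mu L = 0}"
  have "lower_contour le A U \<and> mu U = 0"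
    unfolding U_def mu_def
    by (rule core_union) (use nonneg cA L0 in \<open>auto simp: mu_def\<close>)
  then have Ulow: "lower_contour le A U" and muU: "mu U = 0" by auto
  have nuU: "nu' U = r" using mu_eq[OF Ulow] muU Dpos[OF Ulow] by simp
  show ?thesis
  proof (intro exI conjI allI impI)
    show "lower_contour le A U" by fact
  next
    fix L assume low: "lower_contour le A L"
    show "xi \<phi> \<pi>0 FG FB U \<le> xi \<phi> \<pi>0 FG FB L"
      unfolding xi_eq using nu01[OF Ulow] nu01[OF low] r_le[OF low] nuU
      by (intro strict_mono_on_leD[OF phi]) auto
  next
    fix L assume H: "lower_contour le A L \<and> xi \<phi> \<pi>0 FG FB L = xi \<phi> \<pi>0 FG FB U"
    then have low: "lower_contour le A L" by simp
    have "nu' U = nu' L"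
      using strict_mono_on_eqD[OF phi _ nu01[OF low] nu01[OF Ulow]] H by (simp add: xi_eq)
    then have "mu L = 0" using mu_eq[OF low] nuU by simp
    then show "L \<subseteq> U" using low unfolding U_def by blast
  qed
qed

end
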